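(* Let $N=1$. For all choices of the unitaries $U_1,\dots,U_L$ and of the Hermitian unitary $\tilde O$, the following control tensors vanish identically (for all window strings $\vec n$ with $L\ge n_1\ge\cdots\ge n_k\ge1$ satisfying the indicated equalities): (i) $k=2$: $\mathbf{T}^{(2)}_{(1)}(n_1,n_2)=0$ whenever $n_1=n_2$. (ii) $k=3$: $\mathbf{T}^{(3)}_{(0,1)}(\vec n)=0$ and $\mathbf{T}^{(3)}_{(1,0)}(\vec n)=0$ whenever $n_2=n_3$; $\mathbf{T}^{(3)}_{(1,1)}(\vec n)=0$ whenever $n_1=n_2$. (iii) $k=4$: $\mathbf{T}^{(4)}_{\mu}(\vec n)=0$ in each of the cases: $\mu=(0,0,1)$ with $n_3=n_4$; $\mu=(0,1,0)$ with $n_3=n_4$; $\mu=(0,1,0)$ with $n_2=n_3$; $\mu=(0,1,1)$ with $n_2=n_3$; $\mu=(1,0,0)$ with $n_2=n_3$; $\mu=(1,0,0)$ with $n_1=n_2$; $\mu=(1,0,1)$ with $n_2=n_3$; $\mu=(1,0,1)$ with $n_1=n_2$; $\mu=(1,1,0)$ with $n_1=n_2$; $\mu=(1,1,0)$ with $n_3=n_4$; $\mu=(1,1,1)$ with $n_1=n_2$.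
   Context: Fix integers $L\ge 1$ and $N\ge 1$, and a set $Q$ of $N$ qubit labels. For $q\in Q$ let $\sigma_z^{[q]}$ denote the Pauli-$Z$ operator acting on qubit $q$ tensored with the identity on all other qubits of $(\mathbb{C}^2)^{\otimes N}$. (Digital control) Let $U_1,\dots,U_L$ be arbitrary unitaries on $(\mathbb{C}^2)^{\otimes N}$ ($U_n$ is the control propagator, constant on the $n$-th time window), and let $\tilde O$ be an arbitrary Hermitian unitary operator on $(\mathbb{C}^2)^{\otimes N}$ (the toggling-frame observable). For $q\in Q$ and $n\in\{1,\dots,L\}$ define $\tilde h_q(n)=U_n^\dagger\sigma_z^{[q]}U_n$ and $\bar h_q(n)=-\tilde O^{-1}\tilde h_q(n)\tilde O$. For $k\ge1$, a window string $\vec n=(n_1,\dots,n_k)$ with $L\ge n_1\ge\cdots\ge n_k\ge1$, a qubit string $\vec q=(q_1,\dots,q_k)\in Q^k$ and a sign string $\mu\in\{0,1\}^{k-1}$, the (window-framed) control tensor is $$\mathbf{T}^{(k)}_{\vec q;\mu}(\vec n)=\sum_{b\in\{0,1\}^k}(-1)^{\sum_{j=1}^{k-1}\mu_j b_{j+1}}\Big(\prod^{\downarrow}_{i:\,b_i=1}\bar h_{q_i}(n_i)\Big)\Big(\prod^{\uparrow}_{i:\,b_i=0}\tilde h_{q_i}(n_i)\Big),$$ where $\prod^{\downarrow}$ is the ordered product with the index $i$ decreasing from left to right, $\prod^{\uparrow}$ is the ordered product with $i$ increasing from left to right, and an empty product is the identity. When $N=1$ the qubit string is omitted and we write $\mathbf{T}^{(k)}_{\mu}(\vec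 n)$. *)

theory Defs
  imports "HOL-Analysis.Analysis"
begin

type_synonym op2 = "complex^2^2"

definition mat_adj :: "op2 \<Rightarrow> op2" where
  "mat_adj A = (\<chi> i j. cnj (A $ j $ i))"

definition is_unitary :: "op2 \<Rightarrow> bool" where
  "is_unitary U \<longleftrightarrow> mat_adj U ** U = mat 1 \<and> U ** mat_adj U = mat 1"

definition is_hermitian :: "op2 \<Rightarrow> bool" where
  "is_hermitian A \<longleftrightarrow> mat_adj A = A"

definition sigma_z :: op2 where
  "sigma_z = (\<chi> i j. if i = j then (if i = 1 then 1 else -1) else 0)"

definition h_tilde :: "(nat \<Rightarrow> op2) \<Rightarrow> nat \<Rightarrow> op2" where
  "h_tilde U n = mat_adj (U n) ** sigma_z ** U n"

definition h_bar :: "(nat \<Rightarrow> op2) \<Rightarrow> op2 \<Rightarrow> nat \<Rightarrow> op2" where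
  "h_bar U Ot n = - (matrix_inv Ot ** h_tilde U n ** Ot)"

definition mprod :: "op2 list \<Rightarrow> op2" where
  "mprod xs = foldr (**) xs (mat 1)"

text \<open>Control tensor T^{(k)}_mu(ns) for N = 1. The window string is the list ns
  (ns!0 = n_1, ..., ns!(k-1) = n_k), mu is the sign string as a boolean list
  (mu!(j-1) = True iff mu_j = 1), and a bit string b is encoded by the set S of
  0-based positions i with b_{i+1} = 1.\<close>
definition ctrl_tensor :: "(nat \<Rightarrow> op2) \<Rightarrow> op2 \<Rightarrow> bool list \<Rightarrow> nat list \<Rightarrow> op2" where
  "ctrl_tensor U Ot mu ns =
     (\<Sum>S\<in>Pow {0..<length ns}.
        (-1::real) ^ card {j. j + 1 < length ns \<and> mu ! j \<and> Suc j \<in> S} *\<^sub>R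
        (mprod (map (\<lambda>i. h_bar U Ot (ns ! i)) (rev (filter (\<lambda>i. i \<in> S) [0..<length ns]))) **
         mprod (map (\<lambda>i. h_tilde U (ns ! i)) (filter (\<lambda>i. i \<notin> S) [0..<length ns]))))"

definition window_string :: "nat \<Rightarrow> nat list \<Rightarrow> bool" where
  "window_string L ns \<longleftrightarrow> sorted (rev ns) \<and> (\<forall>n\<in>set ns. 1 \<le> n \<and> n \<le> L)"

end

theory Submission
  imports Defs
begin

lemma sum_Pow_insert:
  assumes "finite A" "a \<notin> A"
  shows "sum f (Pow (insert a A)) = sum f (Pow A) + sum (\<lambda>S. f (insert a S)) (Pow A)"
proof -
  have d: "Pow A \<inter> insert a ` Pow A = {}" using assms(2) by auto
  have i: "inj_on (insert a) (Pow A)" using assms(2) unfolding inj_on_def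
    by (metis PowD Diff_insert_absorb subsetD)
  show ?thesis unfolding Pow_insert
    by (simp add: sum.union_disjoint[OF _ _ d] assms(1) sum.reindex[OF i])
qed

lemma card_cnt: "card {j. j + 1 < m \<and> P j} = length (filter P [0..<m-1])"
proof -
  have "{j. j + 1 < m \<and> P j} = set (filter P [0..<m-1])" by auto
  thus ?thesis by (simp only: distinct_card[OF distinct_filter[OF distinct_upt]])
qed

lemma upt4: "{0..<length [a,b,c,d::nat]} = insert 0 (insert 1 (insert 2 (insert 3 {})))" by auto
lemma upt3: "{0..<length [a,b,c::nat]} = insert 0 (insert 1 (insert 2 {}))" by auto
lemma upt2: "{0..<length [a,b::nat]} = insert 0 (insert 1 {})" by auto


lemma sz: "sigma_z ** sigma_z = mat 1"
  by (simp add: sigma_z_def matrix_matrix_mult_def mat_def vec_eq_iff forall_2 UNIV_2)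

lemma negneg: "(-(A::op2)) ** (-B) = A ** B"
  by (simp add: matrix_matrix_mult_def vec_eq_iff sum_negf)

lemma sq_left: "(A::op2) ** A = mat 1 \<Longrightarrow> A ** (A ** X) = X"
  by (metis matrix_mul_assoc matrix_mul_lid)

lemma h_sq: "is_unitary (U n) \<Longrightarrow> h_tilde U n ** h_tilde U n = mat 1"
proof -
  assume u: "is_unitary (U n)"
  hence a: "U n ** mat_adj (U n) = mat 1" "mat_adj (U n) ** U n = mat 1" by (auto simp: is_unitary_def)
  have "h_tilde U n ** h_tilde U n = mat_adj (U n) ** (sigma_z ** ((U n ** mat_adj (U n)) ** (sigma_z ** U n)))"
    by (simp add: h_tilde_def matrix_mul_assoc)
  also have "\<dots> = mat_adj (U n) ** U n" by (simp add: a matrix_mul_assoc sz)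
  finally show ?thesis using a by simp
qed

lemma g_sq: "is_unitary (U n) \<Longrightarrow> is_unitary Ot \<Longrightarrow> h_bar U Ot n ** h_bar U Ot n = mat 1"
proof -
  assume u: "is_unitary (U n)" and o: "is_unitary Ot"
  define M where "M = matrix_inv Ot"
  have "Ot ** M = mat 1 \<and> M ** Ot = mat 1"
    unfolding M_def matrix_inv_def
    by (rule someI[of _ "mat_adj Ot"]) (use o in \<open>auto simp: is_unitary_def\<close>)
  hence m: "Ot ** M = mat 1" "M ** Ot = mat 1" by auto
  have hh: "h_tilde U n ** h_tilde U n = mat 1" using h_sq[of U n, OF u] .
  have "h_bar U Ot n ** h_bar U Ot n = M ** (h_tilde U n ** ((Ot ** M) ** (h_tilde U n ** Ot)))"
    by (simp add: h_bar_def M_def negneg matrix_mul_assoc)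
  also have "\<dots> = M ** Ot" by (simp add: m hh matrix_mul_assoc)
  finally show ?thesis using m by simp
qed


theorem mainTheorem5:
  fixes L :: nat and U :: "nat \<Rightarrow> complex^2^2" and Ot :: "complex^2^2"
  assumes "L \<ge> 1"
    and "\<forall>n\<in>{1..L}. is_unitary (U n)"
    and "is_hermitian Ot" and "is_unitary Ot"
  shows
    "(\<forall>n1 n2. window_string L [n1, n2] \<and> n1 = n2 \<longrightarrow>
        ctrl_tensor U Ot [True] [n1, n2] = 0)
   \<and> (\<forall>n1 n2 n3. window_string L [n1, n2, n3] \<and> n2 = n3 \<longrightarrow>
        ctrl_tensor U Ot [False, True] [n1, n2, n3] = 0)
   \<and> (\<forall>n1 n2 n3. window_string L [n1, n2, n3] \<and> n2 = n3 \<longrightarrow>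
        ctrl_tensor U Ot [True, False] [n1, n2, n3] = 0)
   \<and> (\<forall>n1 n2 n3. window_string L [n1, n2, n3] \<and> n1 = n2 \<longrightarrow>
        ctrl_tensor U Ot [True, True] [n1, n2, n3] = 0)
   \<and> (\<forall>n1 n2 n3 n4. window_string L [n1, n2, n3, n4] \<and> n3 = n4 \<longrightarrow>
        ctrl_tensor U Ot [False, False, True] [n1, n2, n3, n4] = 0)
   \<and> (\<forall>n1 n2 n3 n4. window_string L [n1, n2, n3, n4] \<and> n3 = n4 \<longrightarrow>
        ctrl_tensor U Ot [False, True, False] [n1, n2, n3, n4] = 0)
   \<and> (\<forall>n1 n2 n3 n4. window_string L [n1, n2, n3, n4] \<and> n2 = n3 \<longrightarrow>
        ctrl_tensor U Ot [False, True, False] [n1, n2, n3, n4] = 0)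
   \<and> (\<forall>n1 n2 n3 n4. window_string L [n1, n2, n3, n4] \<and> n2 = n3 \<longrightarrow>
        ctrl_tensor U Ot [False, True, True] [n1, n2, n3, n4] = 0)
   \<and> (\<forall>n1 n2 n3 n4. window_string L [n1, n2, n3, n4] \<and> n2 = n3 \<longrightarrow>
        ctrl_tensor U Ot [True, False, False] [n1, n2, n3, n4] = 0)
   \<and> (\<forall>n1 n2 n3 n4. window_string L [n1, n2, n3, n4] \<and> n1 = n2 \<longrightarrow>
        ctrl_tensor U Ot [True, False, False] [n1, n2, n3, n4] = 0)
   \<and> (\<forall>n1 n2 n3 n4. window_string L [n1, n2, n3, n4] \<and> n2 = n3 \<longrightarrow>
        ctrl_tensor U Ot [True, False, True] [n1, n2, n3, n4] = 0)
   \<and> (\<forall>n1 n2 n3 n4. window_string L [n1, n2, n3, n4] \<and> n1 = n2 \<longrightarrow>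
        ctrl_tensor U Ot [True, False, True] [n1, n2, n3, n4] = 0)
   \<and> (\<forall>n1 n2 n3 n4. window_string L [n1, n2, n3, n4] \<and> n1 = n2 \<longrightarrow>
        ctrl_tensor U Ot [True, True, False] [n1, n2, n3, n4] = 0)
   \<and> (\<forall>n1 n2 n3 n4. window_string L [n1, n2, n3, n4] \<and> n3 = n4 \<longrightarrow>
        ctrl_tensor U Ot [True, True, False] [n1, n2, n3, n4] = 0)
   \<and> (\<forall>n1 n2 n3 n4. window_string L [n1, n2, n3, n4] \<and> n1 = n2 \<longrightarrow>
        ctrl_tensor U Ot [True, True, True] [n1, n2, n3, n4] = 0)"
  proof -
  have P: "\<And>n. 1 \<le> n \<Longrightarrow> n \<le> L \<Longrightarrow> is_unitary (U n)" using assms(2) by auto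
  have H: "\<And>n X. 1 \<le> n \<Longrightarrow> n \<le> L \<Longrightarrow> h_tilde U n ** (h_tilde U n ** X) = X"
    by (rule sq_left, rule h_sq, erule (1) P)
  have H': "\<And>n. 1 \<le> n \<Longrightarrow> n \<le> L \<Longrightarrow> h_tilde U n ** h_tilde U n = mat 1"
    by (rule h_sq, erule (1) P)
  have G: "\<And>n X. 1 \<le> n \<Longrightarrow> n \<le> L \<Longrightarrow> h_bar U Ot n ** (h_bar U Ot n ** X) = X"
    by (rule sq_left, rule g_sq, erule (1) P, rule assms(4))
  have G': "\<And>n. 1 \<le> n \<Longrightarrow> n \<le> L \<Longrightarrow> h_bar U Ot n ** h_bar U Ot n = mat 1"
    by (rule g_sq, erule (1) P, rule assms(4))
  show ?thesis
    unfolding ctrl_tensor_def upt2 upt3 upt4 card_cnt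
    by (intro conjI; (intro allI impI; elim conjE);
        simp add: window_string_def sum_Pow_insert mprod_def matrix_mul_assoc[symmetric] H H' G G' algebra_simps)
qed

end
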